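(* Let $N\in\mathbb{N}$ with $N>2$, $m,M\in(0,1)$ with $m\le M$, and $a_1,\dots,a_N\in[m,M]$. For $i\in[N]$ let \[ M_i=\frac1N\min\Big\{m+(N-1)M,\ (N-2)(a_i-m)+\sum_{j=1}^N a_j\Big\}, \] and for every non-empty $K\subseteq[N]$ let \[ B^{(K)}=\frac{(N-2)m+\sum_{l\in[N]\setminus K}M_l}{2N-2-|K|}. \] Then $m\le B^{(K)}\le M_k$ for all $k\in K$.
   Context: $[N]=\{1,\dots,N\}$. *)

theory Defs
  imports Complex_Main
begin

definition Mi :: "nat \<Rightarrow> real \<Rightarrow> real \<Rightarrow> (nat \<Rightarrow> real) \<Rightarrow> nat \<Rightarrow> real" where
  "Mi N m M a i = (1 / real N) *
     min (m + (real N - 1) * M) ((real N - 2) * (a i - m) + (\<Sum>j\<in>{1..N}. a j))"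

definition BK :: "nat \<Rightarrow> real \<Rightarrow> real \<Rightarrow> (nat \<Rightarrow> real) \<Rightarrow> nat set \<Rightarrow> real" where
  "BK N m M a K = ((real N - 2) * m + (\<Sum>l\<in>{1..N} - K. Mi N m M a l))
                   / (2 * real N - 2 - real (card K))"

end

theory Submission
  imports Defs
begin

theorem lemma3:
  fixes N :: nat and m M :: real and a :: "nat \<Rightarrow> real" and K :: "nat set"
  assumes "N > 2"
    and "0 < m" and "m < 1" and "0 < M" and "M < 1" and "m \<le> M"
    and "\<And>i. i \<in> {1..N} \<Longrightarrow> m \<le> a i \<and> a i \<le> M"
    and "K \<subseteq> {1..N}" and "K \<noteq> {}"
  shows "m \<le> BK N m M a K \<and> (\<forall>k\<in>K. BK N m M a K \<le> Mi N m M a k)"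
proof -
  define n where "n = real N"
  define c where "c = real (card K)"
  define D where "D = {1..N} - K"
  define S where "S = (\<Sum>j\<in>{1..N}. a j)"
  define T where "T = (\<Sum>j\<in>D. a j)"
  define U where "U = (\<Sum>j\<in>K. a j)"
  define C where "C = m + (n - 1) * M"
  define Y where "Y = (\<lambda>i. (n - 2) * (a i - m) + S)"
  have n2: "n > 2" using assms(1) n_def by simp
  have finK: "finite K" using assms(8) finite_subset by blast
  have cardK: "card K \<le> N" using card_mono[OF _ assms(8)] by simp
  hence cn: "c \<le> n" using c_def n_def by simp
  have c0: "c \<ge> 0" using c_def by simp
  have cardD: "real (card D) = n - c" using D_def card_Diff_subset[OF finK assms(8)] cardK n_def c_def
    by (simp add: of_nat_diff)
  have SU: "S = T + U" unfolding S_def T_def U_def D_def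
    using sum.subset_diff[OF assms(8), of a] by simp
  have Ssum: "S \<ge> n * m"
  proof -
    have "(\<Sum>j\<in>{1..N}. m) \<le> S" unfolding S_def by (rule sum_mono) (use assms(7) in auto)
    thus ?thesis using n_def by simp
  qed
  have Ucm: "U \<ge> c * m"
  proof -
    have "(\<Sum>j\<in>K. m) \<le> U" unfolding U_def by (rule sum_mono) (use assms(7,8) in auto)
    thus ?thesis using c_def by simp
  qed
  have Mi_eq: "\<And>i. Mi N m M a i = min C (Y i) / n"
    unfolding Mi_def C_def Y_def S_def n_def by simp
  have Cm: "C \<ge> n * m"
  proof -
    have "(n - 1) * M \<ge> (n - 1) * m" using assms(6) n2 by (intro mult_left_mono) auto
    thus ?thesis unfolding C_def by (simp add: algebra_simps)
  qed
  have Mim: "\<And>i. i \<in> {1..N} \<Longrightarrow> m \<le> Mi N m M a i"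
  proof -
    fix i assume i: "i \<in> {1..N}"
    have "(n - 2) * (a i - m) \<ge> 0" using assms(7)[OF i] n2 by simp
    hence "Y i \<ge> n * m" using Ssum Y_def by simp
    hence "min C (Y i) \<ge> n * m" using Cm by simp
    thus "m \<le> Mi N m M a i" using Mi_eq n2 by (simp add: pos_le_divide_eq mult.commute)
  qed
  define den where "den = 2 * n - 2 - c"
  have den_pos: "den > 0" using den_def cn n2 by simp
  have BK_eq: "BK N m M a K = ((n - 2) * m + (\<Sum>l\<in>D. Mi N m M a l)) / den"
    unfolding BK_def den_def n_def c_def D_def by simp
  have part1: "m \<le> BK N m M a K"
  proof -
    have "(\<Sum>l\<in>D. m) \<le> (\<Sum>l\<in>D. Mi N m M a l)" by (rule sum_mono) (use Mim D_def in auto)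
    hence "(n - c) * m \<le> (\<Sum>l\<in>D. Mi N m M a l)" using cardD by simp
    hence "den * m \<le> (n - 2) * m + (\<Sum>l\<in>D. Mi N m M a l)" unfolding den_def
      by (simp add: algebra_simps)
    thus ?thesis unfolding BK_eq using den_pos by (simp add: pos_le_divide_eq mult.commute)
  qed
  have part2: "BK N m M a K \<le> Mi N m M a k" if k: "k \<in> K" for k
  proof (cases "C \<le> Y k")
    case True
    hence Mk: "Mi N m M a k = C / n" using Mi_eq by simp
    have "(\<Sum>l\<in>D. Mi N m M a l) \<le> (\<Sum>l\<in>D. C / n)"
      by (rule sum_mono) (use n2 in \<open>simp add: Mi_eq divide_right_mono\<close>)
    hence s: "(\<Sum>l\<in>D. Mi N m M a l) \<le> (n - c) * (C / n)" using cardD by simp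
    have "(n - 2) * m \<le> (n - 2) * (C / n)"
      using Cm n2 by (intro mult_left_mono) (auto simp: pos_le_divide_eq mult.commute)
    have "(n - 2) * m + (\<Sum>l\<in>D. Mi N m M a l) \<le> den * (C / n)"
    proof -
      have "den * (C / n) = (n - 2) * (C / n) + (n - c) * (C / n)" unfolding den_def using n2 by (simp add: field_simps)
      thus ?thesis using s \<open>(n - 2) * m \<le> (n - 2) * (C / n)\<close> by linarith
    qed
    thus ?thesis unfolding BK_eq Mk using den_pos by (simp add: pos_divide_le_eq mult.commute)
  next
    case False
    hence Mk: "Mi N m M a k = Y k / n" using Mi_eq by simp
    have "(\<Sum>l\<in>D. Mi N m M a l) \<le> (\<Sum>l\<in>D. Y l / n)"
      by (rule sum_mono) (use n2 in \<open>simp add: Mi_eq divide_right_mono\<close>)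
    also have "(\<Sum>l\<in>D. Y l / n) = ((n - 2) * (T - (n - c) * m) + (n - c) * S) / n"
    proof -
      have "(\<Sum>l\<in>D. Y l) = (\<Sum>l\<in>D. (n - 2) * a l) - (\<Sum>l\<in>D. (n - 2) * m) + (\<Sum>l\<in>D. S)"
        unfolding Y_def by (simp add: sum.distrib sum_subtractf algebra_simps)
      also have "\<dots> = (n - 2) * (T - (n - c) * m) + (n - c) * S"
        unfolding T_def by (simp only: sum_distrib_left[symmetric] sum_constant cardD) (simp add: algebra_simps)
      finally show ?thesis by (simp add: sum_divide_distrib[symmetric])
    qed
    finally have s: "(\<Sum>l\<in>D. Mi N m M a l) \<le> ((n - 2) * (T - (n - c) * m) + (n - c) * S) / n" .
    have km: "a k \<ge> m" using assms(7) assms(8) k by auto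
    have key: "n * ((n - 2) * m) + ((n - 2) * (T - (n - c) * m) + (n - c) * S) \<le> den * Y k"
    proof -
      have diff: "den * Y k - (n * ((n - 2) * m) + ((n - 2) * (T - (n - c) * m) + (n - c) * S))
          = (n - 2) * (den * (a k - m) + (U - c * m))"
        unfolding den_def Y_def SU by (simp add: algebra_simps)
      have "den * (a k - m) \<ge> 0" using den_pos km by simp
      hence "(n - 2) * (den * (a k - m) + (U - c * m)) \<ge> 0" using Ucm n2 by simp
      thus ?thesis using diff by linarith
    qed
    have "(n - 2) * m + (\<Sum>l\<in>D. Mi N m M a l) \<le> den * (Y k / n)"
    proof -
      have "(n - 2) * m + ((n - 2) * (T - (n - c) * m) + (n - c) * S) / n \<le> den * Y k / n"
      proof -
        have e: "(n - 2) * m + ((n - 2) * (T - (n - c) * m) + (n - c) * S) / n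
            = (n * ((n - 2) * m) + ((n - 2) * (T - (n - c) * m) + (n - c) * S)) / n"
          using n2 by (simp add: add_divide_distrib)
        show ?thesis unfolding e using key n2 by (intro divide_right_mono) auto
      qed
      thus ?thesis using s by simp
    qed
    thus ?thesis unfolding BK_eq Mk using den_pos by (simp add: pos_divide_le_eq mult.commute)
  qed
  show ?thesis using part1 part2 by blast
qed

end
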